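(* Let $R$ be a ring, $\mathfrak a\in\mathrm{Ass}_l(R)$, $S\in\mathrm{Den}_l(R,\mathfrak a)$ and $A=S^{-1}R$. Then $A=Q_{\mathfrak a}(R)$ (i.e. the natural ring homomorphism $S^{-1}R\to S_{\mathfrak a}(R)^{-1}R$, $s^{-1}r\mapsto s^{-1}r$, is an isomorphism) if and only if $Q_l(A)=A$ (i.e. the natural embedding $A\to Q_l(A)$ is an isomorphism).
   Context: Rings are associative with $1$. A multiplicatively closed subset $S$ ($1\in S$, $0\notin S$) is a left Ore set if $Sr\cap Rs\ne\emptyset$ for all $r\in R,s\in S$; $\mathrm{ass}(S):=\{r\mid sr=0\text{ for some }s\in S\}$; it is a left denominator set if moreover $rs=0$ ($s\in S$) implies $tr=0$ for some $t\in S$. $\mathrm{Den}_l(R)$ is the set of left denominator sets, $\mathrm{Ass}_l(R)=\{\mathrm{ass}(S)\mid S\in\mathrm{Den}_l(R)\}$, $\mathrm{Den}_l(R,\mathfrak a)=\{S\mid\mathrm{ass}(S)=\mathfrak a\}$; $S_{\mathfrak a}(R)$ is the largest element of $\mathrm{Den}_l(R,\mathfrak a)$ and $Q_{\mathfrak a}(R):=S_{\mathfrak a}(R)^{-1}R$. For a ring $B$, $Q_l(B):=S_0(B)^{-1}B$ where $S_0(B)$ is the largest element of $\mathrm{Den}_l(B,0)$. *)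

theory Defs
  imports Main
begin

definition mult_closed :: "'a::ring_1 set \<Rightarrow> bool" where
  "mult_closed S \<longleftrightarrow> 1 \<in> S \<and> 0 \<notin> S \<and> (\<forall>s\<in>S. \<forall>t\<in>S. s * t \<in> S)"

definition left_ore :: "'a::ring_1 set \<Rightarrow> bool" where
  "left_ore S \<longleftrightarrow> mult_closed S \<and>
     (\<forall>r. \<forall>s\<in>S. \<exists>s'\<in>S. \<exists>r'. s' * r = r' * s)"

definition ass :: "'a::ring_1 set \<Rightarrow> 'a set" where
  "ass S = {r. \<exists>s\<in>S. s * r = 0}"

definition left_den :: "'a::ring_1 set \<Rightarrow> bool" where
  "left_den S \<longleftrightarrow> left_ore S \<and>
     (\<forall>r. \<forall>s\<in>S. r * s = 0 \<longrightarrow> (\<exists>t\<in>S. t * r = 0))"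

text \<open>Den_l(R): the left denominator sets of the ring (the ring is the whole type).\<close>
definition Den_l :: "'a::ring_1 set set" where
  "Den_l = {S. left_den S}"

definition Ass_l :: "'a::ring_1 set set" where
  "Ass_l = ass ` Den_l"

definition Den_l_at :: "'a::ring_1 set \<Rightarrow> 'a set set" where
  "Den_l_at \<aa> = {S \<in> Den_l. ass S = \<aa>}"

definition S_max :: "'a::ring_1 set \<Rightarrow> 'a set" where
  "S_max \<aa> = (THE S. S \<in> Den_l_at \<aa> \<and> (\<forall>T\<in>Den_l_at \<aa>. T \<subseteq> S))"

abbreviation S_0 :: "'a::ring_1 set" where
  "S_0 \<equiv> S_max {0}"

definition ring_hom1 :: "('a::ring_1 \<Rightarrow> 'b::ring_1) \<Rightarrow> bool" where
  "ring_hom1 f \<longleftrightarrow> f 1 = 1 \<and> (\<forall>x y. f (x + y) = f x + f y) \<and> (\<forall>x y. f (x * y) = f x * f y)"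

definition ring_iso1 :: "('a::ring_1 \<Rightarrow> 'b::ring_1) \<Rightarrow> bool" where
  "ring_iso1 f \<longleftrightarrow> ring_hom1 f \<and> bij f"

text \<open>sigma : R -> Q is a left ring of fractions (left localization) of R at S,
  i.e. Q = S^{-1}R with its natural map: sigma is a ring homomorphism, the images of
  elements of S are units, every element is sigma(s)^{-1} sigma(r), and
  ker sigma = ass(S).\<close>
definition left_loc :: "('a::ring_1 \<Rightarrow> 'b::ring_1) \<Rightarrow> 'a set \<Rightarrow> bool" where
  "left_loc \<sigma> S \<longleftrightarrow> ring_hom1 \<sigma> \<and>
     (\<forall>s\<in>S. \<exists>u. u * \<sigma> s = 1 \<and> \<sigma> s * u = 1) \<and>
     (\<forall>q. \<exists>s\<in>S. \<exists>r. \<sigma> s * q = \<sigma> r) \<and>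
     (\<forall>r. \<sigma> r = 0 \<longleftrightarrow> r \<in> ass S)"

end

theory Submission
  imports Defs
begin

inductive_set gen :: "'a::ring_1 set \<Rightarrow> 'a set" for U where
  gen_one: "1 \<in> gen U"
| gen_mul: "u \<in> U \<Longrightarrow> m \<in> gen U \<Longrightarrow> u * m \<in> gen U"

lemma gen_mult: "m1 \<in> gen U \<Longrightarrow> m2 \<in> gen U \<Longrightarrow> m1 * m2 \<in> gen U"
  by (induction m1 rule: gen.induct) (auto simp: mult.assoc intro: gen.intros)

lemma gen_sup: "U \<subseteq> gen U" using gen_mul[OF _ gen_one] by fastforce

lemma den_at_D:
  assumes "X \<in> Den_l_at a"
  shows "1 \<in> X" "0 \<notin> X" "\<And>s t. s\<in>X \<Longrightarrow> t\<in>X \<Longrightarrow> s*t \<in> X"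
    "\<And>r s. s \<in> X \<Longrightarrow> \<exists>s'\<in>X. \<exists>r'. s'*r = r'*s"
    "\<And>r s. s\<in>X \<Longrightarrow> r*s = 0 \<Longrightarrow> \<exists>t\<in>X. t*r = 0"
    "\<And>r. r \<in> a \<longleftrightarrow> (\<exists>s\<in>X. s*r = 0)"
  using assms unfolding Den_l_at_def Den_l_def left_den_def left_ore_def mult_closed_def ass_def by auto

lemma den_at_I:
  assumes "1 \<in> X" "0 \<notin> X" "\<And>s t. s\<in>X \<Longrightarrow> t\<in>X \<Longrightarrow> s*t \<in> X"
    "\<And>r s. s \<in> X \<Longrightarrow> \<exists>s'\<in>X. \<exists>r'. s'*r = r'*s"
    "\<And>r s. s\<in>X \<Longrightarrow> r*s = 0 \<Longrightarrow> \<exists>t\<in>X. t*r = 0"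
    "\<And>r. r \<in> a \<longleftrightarrow> (\<exists>s\<in>X. s*r = 0)"
  shows "X \<in> Den_l_at a"
  unfolding Den_l_at_def Den_l_def left_den_def left_ore_def mult_closed_def ass_def
  using assms by auto

lemma union_den:
  assumes X0: "X0 \<in> Den_l_at a"
  defines "U \<equiv> \<Union>(Den_l_at a)"
  shows "U \<in> Den_l_at a"
proof -
  have a0: "0 \<in> a" using den_at_D(1,6)[OF X0] by force
  have a1: "1 \<notin> a" using den_at_D(2,6)[OF X0] by force
  have XU: "X \<subseteq> U" if "X \<in> Den_l_at a" for X using that U_def by auto
  have u1: "x \<in> a" if "u \<in> U" "u*x \<in> a" for u x
  proof -
    from that(1) obtain X where X: "X \<in> Den_l_at a" "u \<in> X" unfolding U_def by auto
    from that(2) den_at_D(6)[OF X(1)] obtain s where "s\<in>X" "s*(u*x) = 0" by auto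
    hence "s*u \<in> X" "(s*u)*x = 0" using den_at_D(3)[OF X(1)] X(2) by (auto simp: mult.assoc)
    thus ?thesis using den_at_D(6)[OF X(1)] by auto
  qed
  have g1: "m \<in> gen U \<Longrightarrow> m*x \<in> a \<Longrightarrow> x \<in> a" for m x
  proof (induction m arbitrary: x rule: gen.induct)
    case gen_one thus ?case by simp
  next
    case (gen_mul u m)
    have "u*(m*x) \<in> a" using gen_mul.prems by (simp add: mult.assoc)
    hence "m*x \<in> a" using u1 gen_mul.hyps(1) by blast
    thus ?case using gen_mul.IH by blast
  qed
  have ore: "m \<in> gen U \<Longrightarrow> \<exists>m'\<in>gen U. \<exists>r'. m'*r = r'*m" for m r
  proof (induction m arbitrary: r rule: gen.induct)
    case gen_one have "1*r = r*1" by simp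
    thus ?case using gen.gen_one by blast
  next
    case (gen_mul u m)
    obtain m' r' where m': "m' \<in> gen U" "m'*r = r'*m" using gen_mul.IH by blast
    from gen_mul.hyps obtain X where X: "X \<in> Den_l_at a" "u \<in> X" unfolding U_def by auto
    obtain v r'' where v: "v \<in> X" "v*r' = r''*u" using den_at_D(4)[OF X(1) X(2)] by blast
    have "v \<in> gen U" using XU[OF X(1)] v(1) gen_sup by blast
    hence "v*m' \<in> gen U" using gen_mult m'(1) by blast
    moreover have "(v*m')*r = r''*(u*m)" using m'(2) v(2) by (metis mult.assoc)
    ultimately show ?case by blast
  qed
  have den: "m \<in> gen U \<Longrightarrow> r*m = 0 \<Longrightarrow> \<exists>t\<in>gen U. t*r = 0" for m r
  proof (induction m arbitrary: r rule: gen.induct)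
    case gen_one thus ?case using gen.gen_one by auto
  next
    case (gen_mul u m)
    have "(r*u)*m = 0" using gen_mul.prems by (simp add: mult.assoc)
    then obtain t where t: "t \<in> gen U" "t*(r*u) = 0" using gen_mul.IH by blast
    from gen_mul.hyps obtain X where X: "X \<in> Den_l_at a" "u \<in> X" unfolding U_def by auto
    have "(t*r)*u = 0" using t(2) by (simp add: mult.assoc)
    then obtain t' where t': "t' \<in> X" "t'*(t*r) = 0" using den_at_D(5)[OF X(1) X(2)] by blast
    have "t' \<in> gen U" using XU[OF X(1)] t'(1) gen_sup by blast
    hence "t'*t \<in> gen U" "(t'*t)*r = 0" using gen_mult t(1) t'(2) by (auto simp: mult.assoc)
    thus ?case by blast
  qed
  have Ggen: "gen U \<in> Den_l_at a"
  proof (rule den_at_I)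
    show "1 \<in> gen U" by (rule gen_one)
    show "0 \<notin> gen U"
    proof
      assume "0 \<in> gen U" then have "1 \<in> a" using g1[of 0 1] a0 by simp
      with a1 show False ..
    qed
    show "s*t \<in> gen U" if "s \<in> gen U" "t \<in> gen U" for s t using gen_mult that .
    show "\<exists>s'\<in>gen U. \<exists>r'. s'*r = r'*s" if "s \<in> gen U" for r s using ore that .
    show "\<exists>t\<in>gen U. t*r = 0" if "s \<in> gen U" "r*s = 0" for r s using den that .
    show "r \<in> a \<longleftrightarrow> (\<exists>s\<in>gen U. s*r=0)" for r
    proof
      assume "r\<in>a" then obtain s where "s\<in>X0" "s*r=0" using den_at_D(6)[OF X0] by auto
      thus "\<exists>s\<in>gen U. s*r = 0" using XU[OF X0] gen_sup by blast
    next
      assume "\<exists>s\<in>gen U. s*r=0" thus "r \<in> a" using g1 a0 by auto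
    qed
  qed
  have "gen U \<subseteq> U" using Ggen U_def by auto
  with gen_sup have "gen U = U" by blast
  with Ggen show ?thesis by simp
qed

lemma S_max_props:
  assumes "X0 \<in> Den_l_at a"
  shows "S_max a \<in> Den_l_at a \<and> (\<forall>X\<in>Den_l_at a. X \<subseteq> S_max a)"
proof -
  let ?U = "\<Union>(Den_l_at a)"
  have U: "?U \<in> Den_l_at a" using union_den[OF assms] by simp
  have "S_max a = ?U" unfolding S_max_def
    apply (rule the_equality)
    using U apply blast
    using U by blast
  thus ?thesis using U by auto
qed

lemma hom_simps:
  assumes "ring_hom1 f"
  shows "f 0 = 0" "f 1 = 1" "f (x+y) = f x + f y" "f (x*y) = f x * f y" "f (x - y) = f x - f y"
proof -
  have h: "f 1 = 1" "\<And>x y. f(x+y) = f x + f y" "\<And>x y. f(x*y) = f x * f y"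
    using assms unfolding ring_hom1_def by auto
  have "f (0+0) = f 0 + f 0" by (rule h(2)) thus "f 0 = 0" by simp
  have "f (x - y + y) = f (x-y) + f y" by (rule h(2))
  thus "f (x - y) = f x - f y" by (simp add: eq_diff_eq)
  show "f 1 = 1" "f (x+y) = f x + f y" "f (x*y) = f x * f y" using h by auto
qed


definition isunit :: "'b::ring_1 \<Rightarrow> bool" where
  "isunit x \<longleftrightarrow> (\<exists>u. u*x = 1 \<and> x*u = 1)"

lemma lcancel: "(u::'a::ring_1) * x = 1 \<Longrightarrow> x * c = x * c' \<Longrightarrow> c = c'"
proof -
  assume a: "u * x = 1" "x * c = x * c'"
  have "c = (u*x)*c" using a(1) by simp
  also have "\<dots> = u*(x*c')" using a(2) by (simp add: mult.assoc)
  also have "\<dots> = c'" using a(1) by (simp add: mult.assoc[symmetric])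
  finally show ?thesis .
qed

lemma ll_D:
  assumes "left_loc \<sigma> T"
  shows "ring_hom1 \<sigma>" "\<And>s. s\<in>T \<Longrightarrow> \<exists>u. u * \<sigma> s = 1 \<and> \<sigma> s * u = 1"
    "\<And>q. \<exists>s\<in>T. \<exists>r. \<sigma> s * q = \<sigma> r" "\<And>r. \<sigma> r = 0 \<longleftrightarrow> r \<in> ass T"
  using assms unfolding left_loc_def by auto

lemma loc_unique:
  assumes Tm: "\<And>s t. s\<in>T \<Longrightarrow> t\<in>T \<Longrightarrow> s*t \<in> T"
    and To: "\<And>r s. s\<in>T \<Longrightarrow> \<exists>s'\<in>T. \<exists>r'. s'*r = r'*s"
    and ls: "left_loc \<sigma> T" and lt: "left_loc \<tau> T"
  shows "\<exists>\<phi>. ring_iso1 \<phi> \<and> (\<forall>r. \<phi> (\<sigma> r) = \<tau> r)"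
proof -
  note hs = hom_simps[OF ll_D(1)[OF ls]] and ht = hom_simps[OF ll_D(1)[OF lt]]
  note us = ll_D(2)[OF ls] and ut = ll_D(2)[OF lt]
  note reps = ll_D(3)[OF ls] and rept = ll_D(3)[OF lt]
  note kers = ll_D(4)[OF ls] and kert = ll_D(4)[OF lt]
  have same: "\<tau> x = \<tau> y" if "\<sigma> x = \<sigma> y" for x y
  proof -
    have "\<sigma> (x-y) = 0" using that by (simp add: hs)
    hence "\<tau>(x-y) = 0" using kers kert by simp
    thus ?thesis by (simp add: ht)
  qed
  have same': "\<sigma> x = \<sigma> y" if "\<tau> x = \<tau> y" for x y
  proof -
    have "\<tau> (x-y) = 0" using that by (simp add: ht)
    hence "\<sigma>(x-y) = 0" using kers kert by simp
    thus ?thesis by (simp add: hs)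
  qed
  have canc_t: "c = c'" if "t\<in>T" "\<tau> t * c = \<tau> t * c'" for t c c'
    using ut[OF that(1)] lcancel that(2) by blast
  have canc_s: "c = c'" if "t\<in>T" "\<sigma> t * c = \<sigma> t * c'" for t c c'
    using us[OF that(1)] lcancel that(2) by blast
  define K where "K b c \<longleftrightarrow> (\<forall>t\<in>T. \<forall>r. \<sigma> t * b = \<sigma> r \<longrightarrow> \<tau> t * c = \<tau> r)" for b c
  have Kex: "\<exists>c. K b c" for b
  proof -
    obtain t0 r0 where t0: "t0\<in>T" "\<sigma> t0 * b = \<sigma> r0" using reps by blast
    obtain u0 where u0: "u0*\<tau> t0 = 1" "\<tau> t0*u0 = 1" using ut t0(1) by blast
    have "K b (u0 * \<tau> r0)" unfolding K_def
    proof (intro ballI allI impI)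
      fix t r assume t: "t \<in> T" "\<sigma> t * b = \<sigma> r"
      obtain u x where u: "u\<in>T" "u*t = x*t0" using To[OF t0(1)] by blast
      have "\<sigma> (u*r) = \<sigma> u * (\<sigma> t * b)" using t(2) by (simp add: hs)
      also have "\<dots> = \<sigma> (u*t) * b" by (simp add: hs mult.assoc)
      also have "\<dots> = \<sigma> x * (\<sigma> t0 * b)" using u(2) by (simp add: hs mult.assoc)
      also have "\<dots> = \<sigma> (x*r0)" using t0(2) by (simp add: hs)
      finally have "\<tau> (u*r) = \<tau> (x*r0)" by (rule same)
      have "\<tau> u * (\<tau> t * (u0*\<tau> r0)) = \<tau> (u*t) * u0 * \<tau> r0" by (simp add: ht mult.assoc)
      also have "\<dots> = \<tau> x * (\<tau> t0 * u0) * \<tau> r0" using u(2) by (simp add: ht mult.assoc)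
      also have "\<dots> = \<tau> (x*r0)" using u0 by (simp add: ht)
      also have "\<dots> = \<tau> u * \<tau> r" using \<open>\<tau> (u*r) = \<tau> (x*r0)\<close> by (simp add: ht)
      finally show "\<tau> t * (u0 * \<tau> r0) = \<tau> r" using canc_t[OF u(1)] by blast
    qed
    thus ?thesis by blast
  qed
  have Kun: "c = c'" if "K b c" "K b c'" for b c c'
  proof -
    obtain t r where tr: "t\<in>T" "\<sigma> t * b = \<sigma> r" using reps by blast
    have "\<tau> t * c = \<tau> r" using that(1) tr unfolding K_def by simp
    moreover have "\<tau> t * c' = \<tau> r" using that(2) tr unfolding K_def by simp
    ultimately have "\<tau> t * c = \<tau> t * c'" by simp
    thus ?thesis using canc_t \<open>t\<in>T\<close> by blast
  qed
  define \<phi> where "\<phi> b = (THE c. K b c)" for b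
  have K\<phi>: "K b (\<phi> b)" for b unfolding \<phi>_def
  proof -
    obtain c where c: "K b c" using Kex by blast
    show "K b (THE c. K b c)" by (rule theI[of "K b" c, OF c]) (rule Kun, assumption, rule c)

  qed
  have Kuse: "\<tau> t * \<phi> b = \<tau> r" if "t\<in>T" "\<sigma> t * b = \<sigma> r" for t b r
    using K\<phi>[of b] that unfolding K_def by simp
  have \<phi>eq: "\<phi> b = c" if "K b c" for b c using Kun K\<phi> that by blast
  have \<phi>\<sigma>: "\<phi> (\<sigma> r) = \<tau> r" for r
  proof (rule \<phi>eq, unfold K_def, intro ballI allI impI)
    fix t r' assume "t \<in> T" "\<sigma> t * \<sigma> r = \<sigma> r'"
    hence "\<sigma> (t*r) = \<sigma> r'" by (simp add: hs)
    hence "\<tau> (t*r) = \<tau> r'" by (rule same)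
    thus "\<tau> t * \<tau> r = \<tau> r'" by (simp add: ht)
  qed
  have cd: "\<exists>t\<in>T. \<exists>r1 r2. \<sigma> t * b1 = \<sigma> r1 \<and> \<sigma> t * b2 = \<sigma> r2" for b1 b2
  proof -
    obtain t1 x1 where 1: "t1\<in>T" "\<sigma> t1 * b1 = \<sigma> x1" using reps by blast
    obtain t2 x2 where 2: "t2\<in>T" "\<sigma> t2 * b2 = \<sigma> x2" using reps by blast
    obtain u y where u: "u\<in>T" "u*t1 = y*t2" using To[OF 2(1)] by blast
    have "u*t1 \<in> T" using u(1) 1(1) Tm by blast
    have "\<sigma> (u*t1) * b1 = \<sigma> (u*x1)" using 1(2) by (simp add: hs mult.assoc)
    moreover have "\<sigma> (u*t1) * b2 = \<sigma> (y*x2)" using 2(2) u(2) by (simp add: hs mult.assoc)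
    ultimately show ?thesis using \<open>u*t1 \<in> T\<close> by blast
  qed
  have add: "\<phi> (b1+b2) = \<phi> b1 + \<phi> b2" for b1 b2
  proof -
    obtain t r1 r2 where t: "t\<in>T" "\<sigma> t * b1 = \<sigma> r1" "\<sigma> t * b2 = \<sigma> r2" using cd by blast
    have "\<sigma> t * (b1+b2) = \<sigma> (r1+r2)" using t by (simp add: hs distrib_left)
    hence "\<tau> t * \<phi> (b1+b2) = \<tau> (r1+r2)" by (rule Kuse[OF t(1)])
    also have "\<dots> = \<tau> t * (\<phi> b1 + \<phi> b2)" using Kuse[OF t(1,2)] Kuse[OF t(1,3)] by (simp add: ht distrib_left)
    finally show ?thesis using canc_t[OF t(1)] by blast
  qed
  have mul: "\<phi> (b1*b2) = \<phi> b1 * \<phi> b2" for b1 b2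
  proof -
    obtain t1 x1 where 1: "t1\<in>T" "\<sigma> t1 * b1 = \<sigma> x1" using reps by blast
    obtain t2 x2 where 2: "t2\<in>T" "\<sigma> t2 * b2 = \<sigma> x2" using reps by blast
    obtain u y where u: "u\<in>T" "u*x1 = y*t2" using To[OF 2(1)] by blast
    have ut1: "u*t1 \<in> T" using u(1) 1(1) Tm by blast
    have "\<sigma> (u*t1) * (b1*b2) = \<sigma> u * (\<sigma> t1 * b1) * b2" by (simp add: hs mult.assoc)
    also have "\<dots> = \<sigma> (u*x1) * b2" using 1(2) by (simp add: hs)
    also have "\<dots> = \<sigma> y * (\<sigma> t2 * b2)" using u(2) by (simp add: hs mult.assoc)
    also have "\<dots> = \<sigma> (y*x2)" using 2(2) by (simp add: hs)
    finally have "\<tau> (u*t1) * \<phi> (b1*b2) = \<tau> (y*x2)" by (rule Kuse[OF ut1])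
    also have "\<dots> = \<tau> y * (\<tau> t2 * \<phi> b2)" using Kuse[OF 2] by (simp add: ht)
    also have "\<dots> = \<tau> (u*x1) * \<phi> b2" using u(2) by (simp add: ht mult.assoc)
    also have "\<dots> = \<tau> u * (\<tau> t1 * \<phi> b1) * \<phi> b2" using Kuse[OF 1] by (simp add: ht)
    also have "\<dots> = \<tau> (u*t1) * (\<phi> b1 * \<phi> b2)" by (simp add: ht mult.assoc)
    finally show ?thesis using canc_t[OF ut1] by blast
  qed
  have one: "\<phi> 1 = 1" using \<phi>\<sigma>[of 1] by (simp add: hs ht)
  have hom: "ring_hom1 \<phi>" unfolding ring_hom1_def using one add mul by simp
  note h\<phi> = hom_simps[OF hom]
  have ker: "b = 0" if "\<phi> b = 0" for b
  proof -
    obtain t r where t: "t\<in>T" "\<sigma> t * b = \<sigma> r" using reps by blast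
    have "\<tau> r = 0" using Kuse[OF t] that by simp
    hence "\<sigma> r = 0" using kers kert by simp
    hence "\<sigma> t * b = \<sigma> t * 0" using t(2) by simp
    thus ?thesis using canc_s[OF t(1)] by blast
  qed
  have "inj \<phi>"
  proof (rule injI)
    fix x y assume "\<phi> x = \<phi> y"
    hence "\<phi> (x - y) = 0" by (simp add: h\<phi>)
    thus "x = y" using ker[of "x - y"] by simp
  qed
  moreover have "surj \<phi>"
  proof -
    have "\<exists>b. \<phi> b = c" for c
    proof -
    obtain t r where t: "t\<in>T" "\<tau> t * c = \<tau> r" using rept by blast
    obtain v where v: "v * \<sigma> t = 1" "\<sigma> t * v = 1" using us[OF t(1)] by blast
    have "\<sigma> t * (v * \<sigma> r) = \<sigma> r" using v(2) by (simp add: mult.assoc[symmetric])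
    hence "\<tau> t * \<phi> (v * \<sigma> r) = \<tau> t * c" using Kuse[OF t(1)] t(2) by simp
    thus ?thesis using canc_t[OF t(1)] by blast
    qed
    hence "\<phi> (SOME b. \<phi> b = c) = c" for c by (rule someI_ex)
    thus ?thesis by (rule surjI)
  qed
  ultimately have "ring_iso1 \<phi>" unfolding ring_iso1_def using hom bij_def by blast
  thus ?thesis using \<phi>\<sigma> by (intro exI[of _ \<phi>]) simp
qed

lemma iso_unit:
  assumes "ring_iso1 f" "isunit (f x)" shows "isunit x"
proof -
  have hf: "ring_hom1 f" and b: "bij f" using assms(1) unfolding ring_iso1_def by auto
  note h = hom_simps[OF hf]
  obtain u where u: "u * f x = 1" "f x * u = 1" using assms(2) unfolding isunit_def by blast
  obtain v where v: "u = f v" using b by (metis bij_pointE)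
  have "f (v*x) = f 1" "f (x*v) = f 1" using u v by (simp_all add: h)
  hence "v*x = 1" "x*v = 1" using b bij_pointE by (metis bij_betw_imp_inj_on inj_eq)+
  thus ?thesis unfolding isunit_def by blast
qed


lemma zcancel: "(u::'a::ring_1) * x = 1 \<Longrightarrow> x * c = 0 \<Longrightarrow> c = 0"
  using lcancel[of u x c 0] by simp

lemma rzcancel: "x * (u::'a::ring_1) = 1 \<Longrightarrow> c * x = 0 \<Longrightarrow> c = 0"
proof -
  assume a: "x * u = 1" "c * x = 0"
  have "c = c * (x * u)" using a(1) by simp
  also have "\<dots> = (c*x)*u" by (simp add: mult.assoc)
  finally show ?thesis using a(2) by simp
qed

lemma unit_mult: "isunit (x::'a::ring_1) \<Longrightarrow> isunit y \<Longrightarrow> isunit (x*y)"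
proof -
  assume "isunit x" "isunit y"
  then obtain u v where u: "u*x = 1" "x*u = 1" and v: "v*y = 1" "y*v = 1" unfolding isunit_def by blast
  have "(v*u)*(x*y) = v*(u*x)*y" by (simp add: mult.assoc)
  also have "\<dots> = 1" using u v by simp
  finally have 1: "(v*u)*(x*y) = 1" .
  have "(x*y)*(v*u) = x*(y*v)*u" by (simp add: mult.assoc)
  also have "\<dots> = 1" using u v by simp
  finally show ?thesis using 1 unfolding isunit_def by blast
qed

lemma units_den:
  assumes nz: "(1::'b::ring_1) \<noteq> 0"
  shows "{x::'b. isunit x} \<in> Den_l_at {0}"
proof (rule den_at_I)
  show "1 \<in> {x::'b. isunit x}" unfolding isunit_def by auto
  show "0 \<notin> {x::'b. isunit x}" using nz unfolding isunit_def by auto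
  show "s*t \<in> {x::'b. isunit x}" if "s \<in> {x. isunit x}" "t \<in> {x. isunit x}" for s t
    using that unit_mult by auto
  show "\<exists>s'\<in>{x::'b. isunit x}. \<exists>r'. s'*r = r'*s" if hs: "s \<in> {x. isunit x}" for r s
  proof -
    obtain v where v: "v*s = 1" "s*v = 1" using hs by (auto simp: isunit_def)
    have "1*r = (r*v)*s" using v by (simp add: mult.assoc)
    moreover have "(1::'b) \<in> {x. isunit x}" unfolding isunit_def by auto
    ultimately show ?thesis by blast
  qed
  show "\<exists>t\<in>{x::'b. isunit x}. t*r = 0" if hs: "s \<in> {x. isunit x}" and hr: "r*s = 0" for r s
  proof -
    obtain v where v: "v*s = 1" "s*v = 1" using hs by (auto simp: isunit_def)
    have "r = 0" using rzcancel[OF v(2) hr] .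
    moreover have "(1::'b) \<in> {x. isunit x}" unfolding isunit_def by auto
    ultimately show ?thesis by auto
  qed
  show "r \<in> {0} \<longleftrightarrow> (\<exists>s\<in>{x::'b. isunit x}. s*r = 0)" for r
  proof
    assume "r \<in> {0}"
    moreover have "(1::'b) \<in> {x. isunit x}" unfolding isunit_def by auto
    ultimately show "\<exists>s\<in>{x::'b. isunit x}. s*r = 0" by auto
  next
    assume "\<exists>s\<in>{x::'b. isunit x}. s*r = 0"
    then obtain s v where "v*s = 1" "s*r = 0" unfolding isunit_def by auto
    thus "r \<in> {0}" using zcancel by auto
  qed
qed


theorem theorem3p10:
  fixes \<aa> S :: "'a::ring_1 set"
    and \<sigma> :: "'a \<Rightarrow> 'b::ring_1"
    and \<tau> :: "'a \<Rightarrow> 'c::ring_1"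
    and \<rho> :: "'b \<Rightarrow> 'd::ring_1"
  assumes "\<aa> \<in> Ass_l"
    and "S \<in> Den_l_at \<aa>"
    and "left_loc \<sigma> S"
    and "left_loc \<tau> (S_max \<aa>)"
    and "left_loc \<rho> (S_0 :: 'b set)"
  shows "(\<exists>\<phi> :: 'b \<Rightarrow> 'c. ring_iso1 \<phi> \<and> (\<forall>r. \<phi> (\<sigma> r) = \<tau> r)) \<longleftrightarrow> ring_iso1 \<rho>"
proof -
  define T where "T = S_max \<aa>"
  define W where "W = (S_0 :: 'b set)"
  have SD: "S \<in> Den_l_at \<aa>" by (rule assms(2))
  have TD: "T \<in> Den_l_at \<aa>" and Tmax: "\<And>X. X \<in> Den_l_at \<aa> \<Longrightarrow> X \<subseteq> T"
    using S_max_props[OF SD] unfolding T_def by auto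
  have ST: "S \<subseteq> T" using Tmax SD by blast
  have ls: "left_loc \<sigma> S" by (rule assms(3))
  have lt: "left_loc \<tau> T" using assms(4) unfolding T_def .
  have lr: "left_loc \<rho> W" using assms(5) unfolding W_def .
  note hs = hom_simps[OF ll_D(1)[OF ls]] and ht = hom_simps[OF ll_D(1)[OF lt]]
    and hr = hom_simps[OF ll_D(1)[OF lr]]
  have assS: "ass S = \<aa>" and assT: "ass T = \<aa>" using SD TD unfolding Den_l_at_def by auto
  have kers: "\<sigma> r = 0 \<longleftrightarrow> r \<in> \<aa>" for r using ll_D(4)[OF ls] assS by simp
  have kert: "\<tau> r = 0 \<longleftrightarrow> r \<in> \<aa>" for r using ll_D(4)[OF lt] assT by simp
  note us = ll_D(2)[OF ls] and ut = ll_D(2)[OF lt] and reps = ll_D(3)[OF ls]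
  note SDD = den_at_D[OF SD] and TDD = den_at_D[OF TD]
  have nz: "(1::'b) \<noteq> 0"
  proof
    assume "(1::'b) = 0"
    hence "\<sigma> 1 = 0" by (simp add: hs)
    hence "1 \<in> \<aa>" using kers by blast
    then obtain s where "s \<in> S" "s*1 = 0" using SDD(6) by blast
    thus False using SDD(2) by simp
  qed
  have G: "{x::'b. isunit x} \<in> Den_l_at {0}" by (rule units_den[OF nz])
  have W1: "W \<in> Den_l_at {0}" and Wmax: "\<And>X. X \<in> Den_l_at {0} \<Longrightarrow> X \<subseteq> W"
    using S_max_props[OF G] unfolding W_def by auto
  note WDD = den_at_D[OF W1]
  have GW: "x \<in> W" if "isunit x" for x using Wmax[OF G] that by blast
  have Wreg: "b = 0" if "w \<in> W" "w * b = 0" for w b using WDD(6)[of b] that by blast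
  have Wden: "b = 0" if wd: "w \<in> W" "b * w = 0" for w b
  proof -
    obtain t where "t \<in> W" "t * b = 0" using WDD(5)[OF wd] by blast
    thus ?thesis using Wreg by blast
  qed
  have SW: "\<sigma> s \<in> W" if "s \<in> S" for s using us[OF that] GW unfolding isunit_def by blast

  have claimA: "(\<exists>\<phi> :: 'b \<Rightarrow> 'c. ring_iso1 \<phi> \<and> (\<forall>r. \<phi> (\<sigma> r) = \<tau> r)) \<longleftrightarrow> (\<forall>t\<in>T. isunit (\<sigma> t))"
  proof
    assume "\<exists>\<phi> :: 'b \<Rightarrow> 'c. ring_iso1 \<phi> \<and> (\<forall>r. \<phi> (\<sigma> r) = \<tau> r)"
    then obtain \<phi> :: "'b \<Rightarrow> 'c" where \<phi>: "ring_iso1 \<phi>" "\<And>r. \<phi> (\<sigma> r) = \<tau> r" by blast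
    show "\<forall>t\<in>T. isunit (\<sigma> t)"
    proof
      fix t assume "t \<in> T"
      hence "isunit (\<phi> (\<sigma> t))" using ut \<phi>(2) unfolding isunit_def by simp
      thus "isunit (\<sigma> t)" by (rule iso_unit[OF \<phi>(1)])
    qed
  next
    assume U: "\<forall>t\<in>T. isunit (\<sigma> t)"
    have "left_loc \<sigma> T" unfolding left_loc_def
    proof (intro conjI allI ballI)
      show "ring_hom1 \<sigma>" by (rule ll_D(1)[OF ls])
      show "\<exists>u. u * \<sigma> s = 1 \<and> \<sigma> s * u = 1" if "s \<in> T" for s
        using U that unfolding isunit_def by blast
      show "\<exists>s\<in>T. \<exists>r. \<sigma> s * q = \<sigma> r" for q using reps[of q] ST by blast
      show "\<sigma> r = 0 \<longleftrightarrow> r \<in> ass T" for r using kers assT by simp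
    qed
    thus "\<exists>\<phi> :: 'b \<Rightarrow> 'c. ring_iso1 \<phi> \<and> (\<forall>r. \<phi> (\<sigma> r) = \<tau> r)"
      using loc_unique[of T \<sigma> \<tau>] TDD(3,4) lt by blast
  qed

  have claimB: "ring_iso1 \<rho> \<longleftrightarrow> (\<forall>w\<in>W. isunit w)"
  proof
    assume iso: "ring_iso1 \<rho>"
    show "\<forall>w\<in>W. isunit w"
    proof
      fix w assume "w \<in> W"
      hence "isunit (\<rho> w)" using ll_D(2)[OF lr] unfolding isunit_def by simp
      thus "isunit w" by (rule iso_unit[OF iso])
    qed
  next
    assume U: "\<forall>w\<in>W. isunit w"
    have kerr: "\<rho> x = 0 \<longleftrightarrow> x = 0" for x
    proof -
      have "ass W = {0}" using W1 unfolding Den_l_at_def by auto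
      thus ?thesis using ll_D(4)[OF lr, of x] by simp
    qed
    have "inj \<rho>"
    proof (rule injI)
      fix x y assume "\<rho> x = \<rho> y"
      hence "\<rho> (x - y) = 0" by (simp add: hr)
      thus "x = y" using kerr[of "x - y"] by simp
    qed
    moreover have "surj \<rho>"
    proof -
      have "\<exists>b. \<rho> b = d" for d
      proof -
        obtain w b where wb: "w \<in> W" "\<rho> w * d = \<rho> b" using ll_D(3)[OF lr] by blast
        obtain v where v: "v * w = 1" "w * v = 1" using U wb(1) unfolding isunit_def by blast
        have "\<rho> (v * b) = \<rho> v * (\<rho> w * d)" using wb(2) by (simp add: hr)
        also have "\<dots> = \<rho> (v * w) * d" by (simp add: hr mult.assoc)
        also have "\<dots> = d" using v(1) by (simp add: hr)
        finally show ?thesis by blast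
      qed
      hence "\<rho> (SOME b. \<rho> b = d) = d" for d by (rule someI_ex)
      thus ?thesis by (rule surjI)
    qed
    ultimately show "ring_iso1 \<rho>" unfolding ring_iso1_def bij_def using ll_D(1)[OF lr] by blast
  qed

  have claimC1: "\<forall>t\<in>T. isunit (\<sigma> t)" if UW: "\<forall>w\<in>W. isunit w"
  proof -
    have canR: "q = 0" if ct: "t \<in> T" "q * \<sigma> t = 0" for t q
    proof -
      obtain s r where sr: "s \<in> S" "\<sigma> s * q = \<sigma> r" using reps by blast
      have "\<sigma> (r*t) = \<sigma> s * (q * \<sigma> t)" using sr(2) by (simp add: hs mult.assoc[symmetric])
      hence "\<sigma> (r*t) = 0" using ct(2) by simp
      hence "\<tau> (r * t) = 0" using kers kert by simp
      hence "\<tau> r * \<tau> t = 0" by (simp add: ht)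
      moreover obtain v where "\<tau> t * v = 1" using ut[OF ct(1)] by blast
      ultimately have "\<tau> r = 0" using rzcancel by blast
      hence "\<sigma> r = 0" using kers kert by simp
      hence "\<sigma> s * q = 0" using sr(2) by simp
      moreover obtain v where "v * \<sigma> s = 1" using us[OF sr(1)] by blast
      ultimately show ?thesis using zcancel by blast
    qed
    have canL: "q = 0" if ct: "t \<in> T" "\<sigma> t * q = 0" for t q
    proof -
      obtain s r where sr: "s \<in> S" "\<sigma> s * q = \<sigma> r" using reps by blast
      obtain s1 x where sx: "s1 \<in> S" "s1 * t = x * s" using SDD(4)[OF sr(1)] by blast
      have "\<sigma> (x*r) = \<sigma> (x * s) * q" using sr(2) by (simp add: hs mult.assoc)
      also have "\<dots> = \<sigma> s1 * (\<sigma> t * q)" using sx(2)[symmetric] by (simp add: hs mult.assoc)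
      finally have "\<sigma> (x*r) = 0" using ct(2) by simp
      hence "\<tau> (x * r) = 0" using kers kert by simp
      hence txr: "\<tau> x * \<tau> r = 0" by (simp add: ht)
      have sT: "s \<in> T" using ST sr(1) by blast
      obtain is' where is': "is' * \<tau> s = 1" "\<tau> s * is' = 1" using ut[OF sT] by blast
      have s1t: "s1 * t \<in> T" using TDD(3) ST sx(1) ct(1) by blast
      have "\<tau> (s1 * t) * (is' * \<tau> r) = \<tau> x * (\<tau> s * is') * \<tau> r"
        using sx(2) by (simp add: ht mult.assoc)
      also have "\<dots> = 0" using is'(2) txr by simp
      finally have "\<tau> (s1 * t) * (is' * \<tau> r) = 0" .
      moreover obtain v where "v * \<tau> (s1 * t) = 1" using ut[OF s1t] by blast
      ultimately have "is' * \<tau> r = 0" using zcancel by blast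
      hence "\<tau> s * (is' * \<tau> r) = 0" by simp
      hence "\<tau> r = 0" using is'(2) by (simp add: mult.assoc[symmetric])
      hence "\<sigma> r = 0" using kers kert by simp
      hence "\<sigma> s * q = 0" using sr(2) by simp
      moreover obtain v where "v * \<sigma> s = 1" using us[OF sr(1)] by blast
      ultimately show ?thesis using zcancel by blast
    qed
    have V: "\<sigma> ` T \<in> Den_l_at {0}"
    proof (rule den_at_I)
      show "1 \<in> \<sigma> ` T" using TDD(1) hs(2) by (metis image_eqI)
      show "0 \<notin> \<sigma> ` T"
      proof
        assume "0 \<in> \<sigma> ` T"
        then obtain t where t: "t \<in> T" "\<sigma> t = 0" by auto
        hence "t \<in> \<aa>" using kers by simp
        then obtain t' where "t' \<in> T" "t' * t = 0" using TDD(6) by blast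
        hence "0 \<in> T" using TDD(3) t(1) by metis
        thus False using TDD(2) by simp
      qed
      show "s * t \<in> \<sigma> ` T" if hst: "s \<in> \<sigma> ` T" "t \<in> \<sigma> ` T" for s t
      proof -
        obtain s0 t0 where "s0 \<in> T" "t0 \<in> T" "s = \<sigma> s0" "t = \<sigma> t0" using hst by auto
        thus ?thesis using TDD(3) hs(4) by (metis image_eqI)
      qed
      show "\<exists>s'\<in>\<sigma> ` T. \<exists>r'. s' * q = r' * v" if hv: "v \<in> \<sigma> ` T" for q v
      proof -
        obtain t where t: "t \<in> T" "v = \<sigma> t" using hv by auto
        obtain s r where sr: "s \<in> S" "\<sigma> s * q = \<sigma> r" using reps by blast
        obtain t' r' where tr: "t' \<in> T" "t' * r = r' * t" using TDD(4)[OF t(1)] by blast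
        have "t' * s \<in> T" using TDD(3) tr(1) ST sr(1) by blast
        moreover have "\<sigma> (t' * s) * q = \<sigma> r' * v"
        proof -
          have "\<sigma> (t' * s) * q = \<sigma> t' * (\<sigma> s * q)" by (simp add: hs mult.assoc)
          also have "\<dots> = \<sigma> (t' * r)" using sr(2) by (simp add: hs)
          also have "\<dots> = \<sigma> r' * v" using tr(2) t(2) by (simp add: hs)
          finally show ?thesis .
        qed
        ultimately show ?thesis by blast
      qed
      show "\<exists>t\<in>\<sigma> ` T. t * q = 0" if hv: "v \<in> \<sigma> ` T" and hq: "q * v = 0" for q v
      proof -
        obtain t where t: "t \<in> T" "v = \<sigma> t" using hv by auto
        have "q = 0" using canR[OF t(1)] hq t(2) by simp
        moreover have "1 \<in> \<sigma> ` T" using TDD(1) hs(2) by (metis image_eqI)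
        ultimately show ?thesis by auto
      qed
      show "q \<in> {0} \<longleftrightarrow> (\<exists>v\<in>\<sigma> ` T. v * q = 0)" for q
      proof
        assume "q \<in> {0}"
        moreover have "1 \<in> \<sigma> ` T" using TDD(1) hs(2) by (metis image_eqI)
        ultimately show "\<exists>v\<in>\<sigma> ` T. v * q = 0" by auto
      next
        assume "\<exists>v\<in>\<sigma> ` T. v * q = 0"
        then obtain t where "t \<in> T" "\<sigma> t * q = 0" by auto
        thus "q \<in> {0}" using canL by blast
      qed
    qed
    hence "\<sigma> ` T \<subseteq> W" by (rule Wmax)
    thus ?thesis using UW by blast
  qed

  have claimC2: "\<forall>w\<in>W. isunit w" if UT: "\<forall>t\<in>T. isunit (\<sigma> t)"
  proof -
    define T' where "T' = {r. \<sigma> r \<in> W}"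
    have ST': "S \<subseteq> T'" using SW unfolding T'_def by blast
    have T'D: "T' \<in> Den_l_at \<aa>"
    proof (rule den_at_I)
      show "1 \<in> T'" unfolding T'_def using WDD(1) by (simp add: hs)
      show "0 \<notin> T'" unfolding T'_def using WDD(2) by (simp add: hs)
      show "s * t \<in> T'" if "s \<in> T'" "t \<in> T'" for s t
        using that WDD(3) unfolding T'_def by (simp add: hs)
      show "\<exists>s'\<in>T'. \<exists>r'. s' * r = r' * t" if ht': "t \<in> T'" for r t
      proof -
        have tW: "\<sigma> t \<in> W" using ht' unfolding T'_def by simp
        obtain w' b' where wb: "w' \<in> W" "w' * \<sigma> r = b' * \<sigma> t" using WDD(4)[OF tW] by blast
        obtain s2 y where s2: "s2 \<in> S" "\<sigma> s2 * b' = \<sigma> y" using reps by blast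
        have w''W: "\<sigma> s2 * w' \<in> W" using WDD(3) SW[OF s2(1)] wb(1) by blast
        obtain s3 z where s3: "s3 \<in> S" "\<sigma> s3 * (\<sigma> s2 * w') = \<sigma> z" using reps by blast
        have "\<sigma> (z * r) = \<sigma> s3 * (\<sigma> s2 * (w' * \<sigma> r))" using s3(2)[symmetric] by (simp add: hs mult.assoc)
        also have "\<dots> = \<sigma> s3 * ((\<sigma> s2 * b') * \<sigma> t)" using wb(2) by (simp add: mult.assoc)
        also have "\<dots> = \<sigma> (s3 * y * t)" using s2(2) by (simp add: hs mult.assoc)
        finally have "\<sigma> (z * r - s3 * y * t) = 0" by (simp add: hs)
        hence "z * r - s3 * y * t \<in> \<aa>" using kers by simp
        then obtain s4 where s4: "s4 \<in> S" "s4 * (z * r - s3 * y * t) = 0" using SDD(6) by blast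
        hence eq: "(s4 * z) * r = (s4 * s3 * y) * t" by (simp add: right_diff_distrib mult.assoc)
        have "\<sigma> (s4 * z) = \<sigma> s4 * (\<sigma> s3 * (\<sigma> s2 * w'))" using s3(2) by (simp add: hs)
        moreover have "\<sigma> s3 * (\<sigma> s2 * w') \<in> W" using WDD(3) SW[OF s3(1)] w''W by blast
        ultimately have "\<sigma> (s4 * z) \<in> W" using WDD(3) SW[OF s4(1)] by simp
        hence "s4 * z \<in> T'" unfolding T'_def by simp
        thus ?thesis using eq by blast
      qed
      show "\<exists>t'\<in>T'. t' * r = 0" if ht': "t \<in> T'" and hr0: "r * t = 0" for r t
      proof -
        have tW: "\<sigma> t \<in> W" using ht' unfolding T'_def by simp
        have "\<sigma> r * \<sigma> t = 0" using hr0 by (simp add: hs(4)[symmetric] hs(1))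
        hence "\<sigma> r = 0" using Wden[OF tW] by blast
        hence "r \<in> \<aa>" using kers by simp
        then obtain s where "s \<in> S" "s * r = 0" using SDD(6) by blast
        thus ?thesis using ST' by blast
      qed
      show "r \<in> \<aa> \<longleftrightarrow> (\<exists>t\<in>T'. t * r = 0)" for r
      proof
        assume "r \<in> \<aa>"
        then obtain s where "s \<in> S" "s * r = 0" using SDD(6) by blast
        thus "\<exists>t\<in>T'. t * r = 0" using ST' by blast
      next
        assume "\<exists>t\<in>T'. t * r = 0"
        then obtain t where t: "t \<in> T'" "t * r = 0" by blast
        have "\<sigma> t * \<sigma> r = 0" using t(2) by (simp add: hs(4)[symmetric] hs(1))
        moreover have "\<sigma> t \<in> W" using t(1) unfolding T'_def by simp
        ultimately have "\<sigma> r = 0" using Wreg by blast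
        thus "r \<in> \<aa>" using kers by simp
      qed
    qed
    hence T'T: "T' \<subseteq> T" by (rule Tmax)
    show ?thesis
    proof
      fix w assume wW: "w \<in> W"
      obtain s r where sr: "s \<in> S" "\<sigma> s * w = \<sigma> r" using reps by blast
      have "\<sigma> r \<in> W" using sr(2)[symmetric] WDD(3) SW[OF sr(1)] wW by simp
      hence "r \<in> T" using T'T unfolding T'_def by blast
      then obtain v where v: "v * \<sigma> r = 1" "\<sigma> r * v = 1" using UT unfolding isunit_def by blast
      obtain is' where is': "is' * \<sigma> s = 1" "\<sigma> s * is' = 1" using us[OF sr(1)] by blast
      have w: "w = is' * \<sigma> r"
      proof -
        have "w = (is' * \<sigma> s) * w" using is'(1) by simp
        also have "\<dots> = is' * \<sigma> r" using sr(2) by (simp add: mult.assoc)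
        finally show ?thesis .
      qed
      have "(v * \<sigma> s) * w = 1" using sr(2) v(1) by (simp add: mult.assoc)
      moreover have "w * (v * \<sigma> s) = 1"
      proof -
        have "w * (v * \<sigma> s) = is' * (\<sigma> r * v) * \<sigma> s" using w by (simp add: mult.assoc)
        also have "\<dots> = 1" using v(2) is'(1) by simp
        finally show ?thesis .
      qed
      ultimately show "isunit w" unfolding isunit_def by blast
    qed
  qed
  show ?thesis using claimA claimB claimC1 claimC2 by blast
qed

end
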